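(* Let $\varrho:\mathbb{R}\to\mathbb{R}$ be Lipschitz continuous but not affine-linear, let $S=(N_0,\dots,N_{L-1},1)$ be a network architecture with $L\ge2$, $N_0=d$ and $N_1\ge3$, and let $\Omega\subset\mathbb{R}^d$ be bounded with nonempty interior. Then the realization map $\mathrm{R}_\varrho^\Omega:\mathcal{NN}(S)\to C(\Omega)$, $\Phi\mapsto\mathrm{R}_\varrho^\Omega(\Phi)$, considered as a map onto its range (with the subspace topology of the supremum norm), is not a quotient map.
   Context: A neural network with architecture $S=(N_0,\dots,N_L)$ is a family $\Phi=((A_\ell,b_\ell))_{\ell=1}^L$, $A_\ell\in\mathbb{R}^{N_\ell\times N_{\ell-1}}$, $b_\ell\in\mathbb{R}^{N_\ell}$; $\mathcal{NN}(S)$ is the finite-dimensional vector space of these with its norm topology. $\mathrm{R}_\varrho^\Omega(\Phi):\Omega\to\mathbb{R}^{N_L}$, $x\mapsto x_L$, where $x_0=x$, $x_\ell=\varrho(A_\ell x_{\ell-1}+b_\ell)$ for $1\le\ell\le L-1$ (componentwise), $x_L=A_Lx_{L-1}+b_L$. A surjective map $q:X\to Y$ between topological spaces is a quotient map if $M\subset Y$ is open iff $q^{-1}(M)$ is open in $X$. *)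

theory Defs
  imports "HOL-Analysis.Analysis"
begin

text \<open>Network parameters of all layers: weights W l i j (layer l, row i, column j)
  and biases B l i.  A network with architecture S = [N_0,...,N_L] is such a pair
  that vanishes outside the index ranges 1 \<le> l \<le> L, i < N_l, j < N_(l-1);
  this set is a finite-dimensional linear space, and the subspace topology of the
  product topology on it is its norm topology.\<close>
type_synonym params = "(nat \<Rightarrow> nat \<Rightarrow> nat \<Rightarrow> real) \<times> (nat \<Rightarrow> nat \<Rightarrow> real)"

definition NN :: "nat list \<Rightarrow> params set" where
  "NN S = {(W, B).
     (\<forall>l i j. (l = 0 \<or> length S \<le> l \<or> S ! l \<le> i \<or> S ! (l - 1) \<le> j) \<longrightarrow> W l i j = 0) \<and>
     (\<forall>l i. (l = 0 \<or> length S \<le> l \<or> S ! l \<le> i) \<longrightarrow> B l i = 0)}"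

text \<open>Points of R^d are represented as functions nat \<Rightarrow> real (coordinates j < d).
  layer_out gives x_l; the activation is applied for 1 \<le> l \<le> L-1, not in layer L.\<close>
fun layer_out :: "(real \<Rightarrow> real) \<Rightarrow> nat list \<Rightarrow> params \<Rightarrow> (nat \<Rightarrow> real) \<Rightarrow> nat \<Rightarrow> nat \<Rightarrow> real" where
  "layer_out \<rho> S \<Phi> x 0 = x"
| "layer_out \<rho> S \<Phi> x (Suc l) = (\<lambda>i. if i < S ! Suc l then
      (let z = (\<Sum>j<S ! l. fst \<Phi> (Suc l) i j * layer_out \<rho> S \<Phi> x l j) + snd \<Phi> (Suc l) i
       in if Suc l < length S - 1 then \<rho> z else z)
     else 0)"

text \<open>Realization on \<Omega> of a network with scalar output (N_L = 1); functions on \<Omega>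
  are represented by their extension by 0 outside \<Omega>.\<close>
definition realization :: "(real \<Rightarrow> real) \<Rightarrow> nat list \<Rightarrow> (nat \<Rightarrow> real) set \<Rightarrow> params \<Rightarrow> (nat \<Rightarrow> real) \<Rightarrow> real" where
  "realization \<rho> S \<Omega> \<Phi> = (\<lambda>x. if x \<in> \<Omega> then layer_out \<rho> S \<Phi> x (length S - 1) 0 else 0)"

definition sup_dist :: "'a set \<Rightarrow> ('a \<Rightarrow> real) \<Rightarrow> ('a \<Rightarrow> real) \<Rightarrow> real" where
  "sup_dist \<Omega> f g = (SUP x\<in>\<Omega>. \<bar>f x - g x\<bar>)"

definition unif_open :: "'a set \<Rightarrow> ('a \<Rightarrow> real) set \<Rightarrow> ('a \<Rightarrow> real) set \<Rightarrow> bool" where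
  "unif_open \<Omega> F M \<longleftrightarrow> M \<subseteq> F \<and> (\<forall>f\<in>M. \<exists>e>0. \<forall>g\<in>F. sup_dist \<Omega> f g < e \<longrightarrow> g \<in> M)"

lemma istopology_unif_open: "istopology (unif_open \<Omega> F)"
  unfolding istopology_def
proof (intro conjI allI impI)
  fix S T assume a: "unif_open \<Omega> F S" "unif_open \<Omega> F T"
  show "unif_open \<Omega> F (S \<inter> T)"
    unfolding unif_open_def
  proof (intro conjI ballI)
    show "S \<inter> T \<subseteq> F" using a unfolding unif_open_def by blast
  next
    fix f assume f: "f \<in> S \<inter> T"
    obtain e1 where e1: "e1 > 0" "\<forall>g\<in>F. sup_dist \<Omega> f g < e1 \<longrightarrow> g \<in> S"
      using a(1) f unfolding unif_open_def by blast
    obtain e2 where e2: "e2 > 0" "\<forall>g\<in>F. sup_dist \<Omega> f g < e2 \<longrightarrow> g \<in> T"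
      using a(2) f unfolding unif_open_def by blast
    show "\<exists>e>0. \<forall>g\<in>F. sup_dist \<Omega> f g < e \<longrightarrow> g \<in> S \<inter> T"
      using e1 e2 by (intro exI[of _ "min e1 e2"]) auto
  qed
next
  fix K assume K: "\<forall>S\<in>K. unif_open \<Omega> F S"
  show "unif_open \<Omega> F (\<Union>K)"
    unfolding unif_open_def
  proof (intro conjI ballI)
    show "\<Union>K \<subseteq> F" using K unfolding unif_open_def by blast
  next
    fix f assume "f \<in> \<Union>K"
    then obtain S where S: "S \<in> K" "f \<in> S" by blast
    then obtain e where "e > 0" "\<forall>g\<in>F. sup_dist \<Omega> f g < e \<longrightarrow> g \<in> S"
      using K unfolding unif_open_def by blast
    then show "\<exists>e>0. \<forall>g\<in>F. sup_dist \<Omega> f g < e \<longrightarrow> g \<in> \<Union>K"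
      using S by blast
  qed
qed

definition unif_top :: "'a set \<Rightarrow> ('a \<Rightarrow> real) set \<Rightarrow> ('a \<Rightarrow> real) topology" where
  "unif_top \<Omega> F = topology (unif_open \<Omega> F)"

lemma openin_unif_top: "openin (unif_top \<Omega> F) = unif_open \<Omega> F"
  unfolding unif_top_def by (rule topology_inverse'[OF istopology_unif_open])

definition eucl_dist :: "nat \<Rightarrow> (nat \<Rightarrow> real) \<Rightarrow> (nat \<Rightarrow> real) \<Rightarrow> real" where
  "eucl_dist d x y = sqrt (\<Sum>j<d. (x j - y j)^2)"

definition Rd :: "nat \<Rightarrow> (nat \<Rightarrow> real) set" where
  "Rd d = {x. \<forall>j\<ge>d. x j = 0}"

end

theory Submission
  imports Defs
begin

lemma coord_cont: "continuous_on UNIV (\<lambda>\<Phi>::params. fst \<Phi> l i j)"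
proof -
  have "continuous_on UNIV (\<lambda>\<Phi>::params. fst \<Phi>)" by (intro continuous_intros)
  then have "continuous_on UNIV (\<lambda>\<Phi>::params. fst \<Phi> l)" by (rule continuous_on_product_then_coordinatewise)
  then have "continuous_on UNIV (\<lambda>\<Phi>::params. fst \<Phi> l i)" by (rule continuous_on_product_then_coordinatewise)
  then show ?thesis by (rule continuous_on_product_then_coordinatewise)
qed

lemma coord_cont2: "continuous_on UNIV (\<lambda>\<Phi>::params. snd \<Phi> l i)"
proof -
  have "continuous_on UNIV (\<lambda>\<Phi>::params. snd \<Phi>)" by (intro continuous_intros)
  then have "continuous_on UNIV (\<lambda>\<Phi>::params. snd \<Phi> l)" by (rule continuous_on_product_then_coordinatewise)
  then show ?thesis by (rule continuous_on_product_then_coordinatewise)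
qed

lemma layer_cont:
  assumes rc: "continuous_on UNIV \<rho>"
  shows "continuous_on UNIV (\<lambda>\<Phi>. layer_out \<rho> S \<Phi> x l i)"
proof (induction l arbitrary: i)
  case 0
  show ?case by simp
next
  case (Suc l)
  have z: "continuous_on UNIV (\<lambda>\<Phi>. (\<Sum>j<S ! l. fst \<Phi> (Suc l) i j * layer_out \<rho> S \<Phi> x l j) + snd \<Phi> (Suc l) i)"
    by (intro continuous_intros coord_cont coord_cont2 Suc.IH)
  have z2: "continuous_on UNIV (\<lambda>\<Phi>. \<rho> ((\<Sum>j<S ! l. fst \<Phi> (Suc l) i j * layer_out \<rho> S \<Phi> x l j) + snd \<Phi> (Suc l) i))"
    using continuous_on_compose2[OF rc z] by simp
  show ?case
  proof (cases "i < S ! Suc l")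
    case True
    then show ?thesis using z z2 by (cases "Suc l < length S - 1") (simp_all add: Let_def)
  next
    case False
    then show ?thesis by simp
  qed
qed

lemma additive_lip_linear:
  fixes f :: "real \<Rightarrow> real"
  assumes add: "\<And>a b. f (a + b) = f a + f b" and lip: "K-lipschitz_on UNIV f"
  shows "f x = f 1 * x"
proof -
  define g where "g y = f y - f 1 * y" for y
  have gadd: "g (a + b) = g a + g b" for a b unfolding g_def using add[of a b] by (simp add: algebra_simps)
  have g1: "g 1 = 0" unfolding g_def by simp
  have g0: "g 0 = 0" using gadd[of 0 0] by simp
  have gneg: "g (- y) = - g y" for y using gadd[of y "-y"] g0 by simp
  have gnat: "g (real n * y) = real n * g y" for n y
    by (induction n) (simp_all add: g0 distrib_right gadd)
  have gint: "g (of_int k) = 0" for k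
  proof (cases "k \<ge> 0")
    case True
    then obtain n where "k = int n" by (metis nonneg_int_cases)
    then show ?thesis using gnat[of n 1] g1 by simp
  next
    case False
    then obtain n where "k = - int n" by (metis nonpos_int_cases linear)
    then show ?thesis using gnat[of n 1] g1 gneg[of "real n"] by simp
  qed
  have glip: "\<bar>g a - g b\<bar> \<le> (K + \<bar>f 1\<bar>) * \<bar>a - b\<bar>" for a b
  proof -
    have "\<bar>f a - f b\<bar> \<le> K * \<bar>a - b\<bar>" using lipschitz_onD[OF lip, of a b] by (simp add: dist_real_def)
    moreover have "\<bar>f 1 * a - f 1 * b\<bar> = \<bar>f 1\<bar> * \<bar>a - b\<bar>" by (simp add: abs_mult[symmetric] algebra_simps)
    ultimately show ?thesis unfolding g_def by (simp add: algebra_simps abs_triangle_ineq4 order_trans[OF abs_triangle_ineq4])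
  qed
  have gb: "\<bar>g y\<bar> \<le> K + \<bar>f 1\<bar>" for y
  proof -
    have "g y = g (y - of_int \<lfloor>y\<rfloor>) + g (of_int \<lfloor>y\<rfloor>)" using gadd[of "y - of_int \<lfloor>y\<rfloor>" "of_int \<lfloor>y\<rfloor>"] by simp
    then have "g y = g (y - of_int \<lfloor>y\<rfloor>) - g 0" using gint g0 by simp
    moreover have "\<bar>y - of_int \<lfloor>y\<rfloor> - 0\<bar> \<le> 1" by linarith
    moreover have "0 \<le> K + \<bar>f 1\<bar>" using lipschitz_on_nonneg[OF lip] by simp
    ultimately show ?thesis using glip[of "y - of_int \<lfloor>y\<rfloor>" 0]
      by (metis mult.right_neutral mult_left_mono order_trans)
  qed
  have "g x = 0"
  proof (rule ccontr)
    assume ne: "g x \<noteq> 0"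
    obtain n :: nat where n: "real n > (K + \<bar>f 1\<bar>) / \<bar>g x\<bar>" using reals_Archimedean2 by blast
    have "\<bar>g (real n * x)\<bar> = real n * \<bar>g x\<bar>" using gnat by (simp add: abs_mult)
    also have "\<dots> > K + \<bar>f 1\<bar>" using n ne by (simp add: field_simps)
    finally show False using gb[of "real n * x"] by simp
  qed
  then show ?thesis unfolding g_def by simp
qed

lemma coord_le_eucl: "i < d \<Longrightarrow> \<bar>x i - y i\<bar> \<le> eucl_dist d x y"
proof -
  assume i: "i < d"
  have "(x i - y i)^2 \<le> (\<Sum>j<d. (x j - y j)^2)"
    by (rule member_le_sum) (use i in auto)
  then have "sqrt ((x i - y i)^2) \<le> eucl_dist d x y" unfolding eucl_dist_def by (rule real_sqrt_le_mono)
  then show ?thesis by simp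
qed

lemma eucl_nonneg: "0 \<le> eucl_dist d x y" unfolding eucl_dist_def by (simp add: sum_nonneg)

lemma layer_lip:
  assumes K: "K-lipschitz_on UNIV \<rho>" and C: "\<forall>l i j. \<bar>fst \<Phi> l i j\<bar> \<le> C"
    and N0: "S ! 0 = d"
  shows "\<forall>i < S ! l. \<bar>layer_out \<rho> S \<Phi> x l i - layer_out \<rho> S \<Phi> y l i\<bar>
            \<le> (\<Prod>k<l. max K 1 * real (S ! k) * C) * eucl_dist d x y"
proof (induction l)
  case 0
  show ?case using coord_le_eucl N0 by simp
next
  case (Suc l)
  define P where "P = (\<Prod>k<l. max K 1 * real (S ! k) * C)"
  have C0: "0 \<le> C" using C abs_ge_zero order_trans by blast
  have P0: "0 \<le> P" unfolding P_def using C0 by (intro prod_nonneg) auto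
  have dd: "0 \<le> eucl_dist d x y" by (rule eucl_nonneg)
  show ?case
  proof (intro allI impI)
    fix i assume i: "i < S ! Suc l"
    define zx where "zx = (\<Sum>j<S ! l. fst \<Phi> (Suc l) i j * layer_out \<rho> S \<Phi> x l j) + snd \<Phi> (Suc l) i"
    define zy where "zy = (\<Sum>j<S ! l. fst \<Phi> (Suc l) i j * layer_out \<rho> S \<Phi> y l j) + snd \<Phi> (Suc l) i"
    have "zx - zy = (\<Sum>j<S ! l. fst \<Phi> (Suc l) i j * (layer_out \<rho> S \<Phi> x l j - layer_out \<rho> S \<Phi> y l j))"
      unfolding zx_def zy_def by (simp add: sum_subtractf algebra_simps)
    then have "\<bar>zx - zy\<bar> \<le> (\<Sum>j<S ! l. \<bar>fst \<Phi> (Suc l) i j * (layer_out \<rho> S \<Phi> x l j - layer_out \<rho> S \<Phi> y l j)\<bar>)"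
      by (simp add: sum_abs)
    also have "\<dots> \<le> (\<Sum>j<S ! l. C * (P * eucl_dist d x y))"
    proof (rule sum_mono)
      fix j assume j: "j \<in> {..<S ! l}"
      have "\<bar>layer_out \<rho> S \<Phi> x l j - layer_out \<rho> S \<Phi> y l j\<bar> \<le> P * eucl_dist d x y"
        using Suc.IH j unfolding P_def by auto
      then show "\<bar>fst \<Phi> (Suc l) i j * (layer_out \<rho> S \<Phi> x l j - layer_out \<rho> S \<Phi> y l j)\<bar> \<le> C * (P * eucl_dist d x y)"
        unfolding abs_mult using C C0 by (intro mult_mono) auto
    qed
    also have "\<dots> = real (S ! l) * C * P * eucl_dist d x y" by simp
    finally have zb: "\<bar>zx - zy\<bar> \<le> real (S ! l) * C * P * eucl_dist d x y" .
    have k0: "0 \<le> K" using lipschitz_on_nonneg[OF K] .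
    have rz: "\<bar>\<rho> zx - \<rho> zy\<bar> \<le> max K 1 * \<bar>zx - zy\<bar>"
    proof -
      have "\<bar>\<rho> zx - \<rho> zy\<bar> \<le> K * \<bar>zx - zy\<bar>" using lipschitz_onD[OF K, of zx zy] by (simp add: dist_real_def)
      also have "\<dots> \<le> max K 1 * \<bar>zx - zy\<bar>" by (intro mult_right_mono) auto
      finally show ?thesis .
    qed
    have z1: "\<bar>zx - zy\<bar> \<le> max K 1 * \<bar>zx - zy\<bar>"
      by (metis abs_ge_zero max.cobounded2 mult_le_cancel_right1 order_less_le_trans not_le mult.commute mult_left_mono mult_1_left)
    have mx: "max K 1 * \<bar>zx - zy\<bar> \<le> max K 1 * (real (S ! l) * C * P * eucl_dist d x y)"
      using zb by (intro mult_left_mono) auto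
    have eq: "(\<Prod>k<Suc l. max K 1 * real (S ! k) * C) * eucl_dist d x y = max K 1 * (real (S ! l) * C * P * eucl_dist d x y)"
      unfolding P_def by (simp add: algebra_simps)
    have "layer_out \<rho> S \<Phi> x (Suc l) i - layer_out \<rho> S \<Phi> y (Suc l) i
        = (if Suc l < length S - 1 then \<rho> zx - \<rho> zy else zx - zy)"
      using i unfolding zx_def zy_def by (simp add: Let_def)
    then show "\<bar>layer_out \<rho> S \<Phi> x (Suc l) i - layer_out \<rho> S \<Phi> y (Suc l) i\<bar>
            \<le> (\<Prod>k<Suc l. max K 1 * real (S ! k) * C) * eucl_dist d x y"
      unfolding eq using rz z1 mx by auto
  qed
qed

fun chain :: "(real \<Rightarrow> real) \<Rightarrow> real \<Rightarrow> real \<Rightarrow> real \<Rightarrow> real \<Rightarrow> nat \<Rightarrow> real \<Rightarrow> real" where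
  "chain \<rho> a2 b2 a3 b3 0 t = \<rho> (a2 * t + b2)"
| "chain \<rho> a2 b2 a3 b3 (Suc k) t = \<rho> (a3 * chain \<rho> a2 b2 a3 b3 k t + b3)"

definition netW :: "nat \<Rightarrow> real \<Rightarrow> real \<Rightarrow> real \<Rightarrow> real \<Rightarrow> nat \<Rightarrow> nat \<Rightarrow> nat \<Rightarrow> real" where
  "netW L m \<epsilon> a2 a3 l i j = (if l = 1 then (if j = 0 \<and> i \<le> 1 then m else 0)
     else if l = L then (if i = 0 \<and> j = 0 then \<epsilon> else if i = 0 \<and> j = 1 \<and> L = 2 then - \<epsilon> else 0)
     else if l = 2 then (if i = 0 \<and> j = 0 then a2 else if i = 0 \<and> j = 1 then - a2 else 0)
     else if 2 < l \<and> l < L then (if i = 0 \<and> j = 0 then a3 else 0) else 0)"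

definition netB :: "nat \<Rightarrow> real \<Rightarrow> real \<Rightarrow> real \<Rightarrow> real \<Rightarrow> real \<Rightarrow> nat \<Rightarrow> nat \<Rightarrow> real" where
  "netB L \<beta> h c b2 b3 l i = (if l = 1 then (if i = 0 then \<beta> else if i = 1 then \<beta> - h else 0)
     else if l = L then (if i = 0 then c else 0)
     else if l = 2 then (if i = 0 then b2 else 0)
     else if 2 < l \<and> l < L then (if i = 0 then b3 else 0) else 0)"

lemma sum_two:
  fixes f :: "nat \<Rightarrow> real"
  assumes "2 \<le> N"
  shows "(\<Sum>j<N. (if j = 0 then a else if j = 1 then b else 0) * f j) = a * f 0 + b * f 1"
proof -
  have "(\<Sum>j<N. (if j = 0 then a else if j = 1 then b else 0) * f j)
      = (\<Sum>j\<in>{0,1}. (if j = 0 then a else if j = 1 then b else 0) * f j)"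
    by (rule sum.mono_neutral_right) (use assms in auto)
  then show ?thesis by simp
qed

lemma sum_one:
  fixes f :: "nat \<Rightarrow> real"
  assumes "1 \<le> N"
  shows "(\<Sum>j<N. (if j = 0 then a else 0) * f j) = a * f 0"
proof -
  have "(\<Sum>j<N. (if j = 0 then a else 0) * f j)
      = (\<Sum>j\<in>{0}. (if j = 0 then a else 0) * f j)"
    by (rule sum.mono_neutral_right) (use assms in auto)
  then show ?thesis by simp
qed

lemma lo_suc: "layer_out \<rho> S \<Phi> x (Suc l) i = (if i < S ! Suc l then
      (let z = (\<Sum>j<S ! l. fst \<Phi> (Suc l) i j * layer_out \<rho> S \<Phi> x l j) + snd \<Phi> (Suc l) i
       in if Suc l < length S - 1 then \<rho> z else z) else 0)"
  by simp

context
  fixes \<rho> :: "real \<Rightarrow> real" and S :: "nat list" and L :: nat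
    and m \<epsilon> a2 a3 \<beta> h c b2 b3 :: real
  assumes L: "L = length S - 1" and L2: "2 \<le> L" and pos: "\<forall>l<length S. 0 < S ! l"
    and N1: "S ! 1 \<ge> 2" and NL: "S ! L = 1"
begin

definition "\<Phi>net = (netW L m \<epsilon> a2 a3, netB L \<beta> h c b2 b3)"

lemma netW_supp:
  assumes "netW L m \<epsilon> a2 a3 l i j \<noteq> 0"
  shows "l \<noteq> 0 \<and> l < length S \<and> i < S ! l \<and> j < S ! (l - 1)"
proof -
  have Ll: "L < length S" using L L2 by linarith
  have p0: "0 < S ! 0" using pos Ll by (metis gr_zeroI less_zeroE)
  have pL: "S ! L = 1" using NL .
  show ?thesis
  proof (cases "l = 1")
    case True
    then show ?thesis using assms p0 N1 Ll L2 unfolding netW_def by (auto split: if_splits)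
  next
    case l1: False
    show ?thesis
    proof (cases "l = L")
      case True
      have "0 < S ! (L - 1)" using pos Ll by auto
      then show ?thesis using assms True l1 L2 N1 Ll pL unfolding netW_def by (auto split: if_splits)
    next
      case lL: False
      show ?thesis
      proof (cases "l = 2")
        case True
        have "0 < S ! 2" using pos Ll L2 True lL by auto
        then show ?thesis using assms True l1 lL L2 N1 Ll unfolding netW_def by (auto split: if_splits)
      next
        case False
        then have "2 < l \<and> l < L" using assms l1 lL unfolding netW_def by (auto split: if_splits)
        moreover have "0 < S ! l" "0 < S ! (l - 1)" using pos calculation Ll by auto
        ultimately show ?thesis using assms False l1 lL Ll unfolding netW_def by (auto split: if_splits)
      qed
    qed
  qed
qed

lemma netB_supp:
  assumes "netB L \<beta> h c b2 b3 l i \<noteq> 0"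
  shows "l \<noteq> 0 \<and> l < length S \<and> i < S ! l"
proof -
  have Ll: "L < length S" using L L2 by linarith
  show ?thesis
  proof (cases "l = 1")
    case True
    then show ?thesis using assms N1 Ll L2 unfolding netB_def by (auto split: if_splits)
  next
    case l1: False
    show ?thesis
    proof (cases "l = L")
      case True
      then show ?thesis using assms True l1 L2 Ll NL unfolding netB_def by (auto split: if_splits)
    next
      case lL: False
      show ?thesis
      proof (cases "l = 2")
        case True
        have "0 < S ! 2" using pos Ll L2 True lL by auto
        then show ?thesis using assms True l1 lL L2 N1 Ll unfolding netB_def by (auto split: if_splits)
      next
        case False
        then have "2 < l \<and> l < L" using assms l1 lL unfolding netB_def by (auto split: if_splits)
        moreover have "0 < S ! l" using pos calculation Ll by auto
        ultimately show ?thesis using assms False l1 lL Ll unfolding netB_def by (auto split: if_splits)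
      qed
    qed
  qed
qed

lemma net_in: "\<Phi>net \<in> NN S"
proof -
  have W: "netW L m \<epsilon> a2 a3 l i j = 0" if "l = 0 \<or> length S \<le> l \<or> S ! l \<le> i \<or> S ! (l - 1) \<le> j" for l i j
    using netW_supp[of l i j] that by linarith
  have B: "netB L \<beta> h c b2 b3 l i = 0" if "l = 0 \<or> length S \<le> l \<or> S ! l \<le> i" for l i
    using netB_supp[of l i] that by linarith
  show ?thesis unfolding NN_def \<Phi>net_def using W B by blast
qed

lemma lo1_0: "layer_out \<rho> S \<Phi>net x 1 0 = \<rho> (m * x 0 + \<beta>)"
proof -
  have Ll: "L < length S" using L L2 by linarith
  have "0 < length S" using Ll by linarith
  then have p0: "1 \<le> S ! 0" using pos by (simp add: Suc_leI)
  have "(\<Sum>j<S ! 0. netW L m \<epsilon> a2 a3 1 0 j * x j) = m * x 0"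
    using sum_one[OF p0, of m x] by (simp add: netW_def)
  moreover have "Suc 0 < length S - 1" using L L2 by linarith
  ultimately show ?thesis using N1 unfolding \<Phi>net_def by (simp add: netB_def Let_def algebra_simps)
qed

lemma lo1_1: "layer_out \<rho> S \<Phi>net x 1 1 = \<rho> (m * x 0 + \<beta> - h)"
proof -
  have Ll: "L < length S" using L L2 by linarith
  have "0 < length S" using Ll by linarith
  then have p0: "1 \<le> S ! 0" using pos by (simp add: Suc_leI)
  have "(\<Sum>j<S ! 0. netW L m \<epsilon> a2 a3 1 1 j * x j) = m * x 0"
    using sum_one[OF p0, of m x] by (simp add: netW_def)
  moreover have "Suc 0 < length S - 1" using L L2 by linarith
  ultimately show ?thesis using N1 unfolding \<Phi>net_def by (simp add: netB_def Let_def algebra_simps)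
qed

lemma lo2: "2 < L \<Longrightarrow> layer_out \<rho> S \<Phi>net x (Suc 1) 0 = \<rho> (a2 * (layer_out \<rho> S \<Phi>net x 1 0 - layer_out \<rho> S \<Phi>net x 1 1) + b2)"
proof -
  assume L3: "2 < L"
  have w: "fst \<Phi>net (Suc 1) 0 = (\<lambda>j. if j = 0 then a2 else if j = 1 then - a2 else 0)"
    using L3 unfolding \<Phi>net_def by (auto simp: netW_def)
  have b: "snd \<Phi>net (Suc 1) 0 = b2" using L3 unfolding \<Phi>net_def by (auto simp: netB_def)
  have s: "(\<Sum>j<S ! 1. fst \<Phi>net (Suc 1) 0 j * layer_out \<rho> S \<Phi>net x 1 j)
      = a2 * layer_out \<rho> S \<Phi>net x 1 0 + (- a2) * layer_out \<rho> S \<Phi>net x 1 1"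
    unfolding w by (rule sum_two[OF N1])
  have p: "0 < S ! Suc 1" using pos L L3 by auto
  have l: "Suc 1 < length S - 1" using L L3 by simp
  have e: "layer_out \<rho> S \<Phi>net x (Suc 1) 0 = (let z = (\<Sum>j<S ! 1. fst \<Phi>net (Suc 1) 0 j * layer_out \<rho> S \<Phi>net x 1 j) + snd \<Phi>net (Suc 1) 0
       in if Suc 1 < length S - 1 then \<rho> z else z)"
    using p lo_suc[of \<rho> S \<Phi>net x 1 0] by (simp only: if_True)
  also have "\<dots> = \<rho> (a2 * layer_out \<rho> S \<Phi>net x 1 0 + (- a2) * layer_out \<rho> S \<Phi>net x 1 1 + b2)"
    unfolding s b Let_def using l by (simp only: if_True)
  finally show ?thesis by (simp add: algebra_simps del: layer_out.simps)
qed

lemma lo3: "Suc (Suc (Suc k)) < L \<Longrightarrow> layer_out \<rho> S \<Phi>net x (Suc (Suc (Suc k))) 0 = \<rho> (a3 * layer_out \<rho> S \<Phi>net x (Suc (Suc k)) 0 + b3)"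
proof -
  assume k: "Suc (Suc (Suc k)) < L"
  have "Suc (Suc k) < length S" using L k by linarith
  then have p: "1 \<le> S ! Suc (Suc k)" using pos by (simp add: Suc_leI)
  have w: "fst \<Phi>net (Suc (Suc (Suc k))) 0 = (\<lambda>j. if j = 0 then a3 else 0)"
    using k unfolding \<Phi>net_def by (auto simp: netW_def)
  have b: "snd \<Phi>net (Suc (Suc (Suc k))) 0 = b3" using k unfolding \<Phi>net_def by (auto simp: netB_def)
  have s: "(\<Sum>j<S ! Suc (Suc k). fst \<Phi>net (Suc (Suc (Suc k))) 0 j * layer_out \<rho> S \<Phi>net x (Suc (Suc k)) j)
      = a3 * layer_out \<rho> S \<Phi>net x (Suc (Suc k)) 0"
    unfolding w by (rule sum_one[OF p])
  have p3: "0 < S ! Suc (Suc (Suc k))" using pos L k by auto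
  have l: "Suc (Suc (Suc k)) < length S - 1" using L k by simp
  have "layer_out \<rho> S \<Phi>net x (Suc (Suc (Suc k))) 0 = (let z = (\<Sum>j<S ! Suc (Suc k). fst \<Phi>net (Suc (Suc (Suc k))) 0 j * layer_out \<rho> S \<Phi>net x (Suc (Suc k)) j) + snd \<Phi>net (Suc (Suc (Suc k))) 0
       in if Suc (Suc (Suc k)) < length S - 1 then \<rho> z else z)"
    using p3 lo_suc[of \<rho> S \<Phi>net x "Suc (Suc k)" 0] by (simp only: if_True)
  also have "\<dots> = \<rho> (a3 * layer_out \<rho> S \<Phi>net x (Suc (Suc k)) 0 + b3)"
    unfolding s b Let_def using l by (simp only: if_True)
  finally show ?thesis .
qed

lemma lo_chain: "Suc (Suc k) < L \<Longrightarrow> layer_out \<rho> S \<Phi>net x (Suc (Suc k)) 0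
   = chain \<rho> a2 b2 a3 b3 k (layer_out \<rho> S \<Phi>net x 1 0 - layer_out \<rho> S \<Phi>net x 1 1)"
proof (induction k)
  case 0
  then show ?case using lo2 by (simp add: numeral_2_eq_2 del: layer_out.simps lo_suc)
next
  case (Suc k)
  then show ?case using lo3[of k] by (simp del: layer_out.simps)
qed

lemma lo_out2: "L = 2 \<Longrightarrow> layer_out \<rho> S \<Phi>net x (Suc 1) 0 = \<epsilon> * (layer_out \<rho> S \<Phi>net x 1 0 - layer_out \<rho> S \<Phi>net x 1 1) + c"
proof -
  assume L2': "L = 2"
  have w: "fst \<Phi>net (Suc 1) 0 = (\<lambda>j. if j = 0 then \<epsilon> else if j = 1 then - \<epsilon> else 0)"
    using L2' unfolding \<Phi>net_def by (auto simp: netW_def)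
  have b: "snd \<Phi>net (Suc 1) 0 = c" using L2' unfolding \<Phi>net_def by (auto simp: netB_def)
  have s: "(\<Sum>j<S ! 1. fst \<Phi>net (Suc 1) 0 j * layer_out \<rho> S \<Phi>net x 1 j)
      = \<epsilon> * layer_out \<rho> S \<Phi>net x 1 0 + (- \<epsilon>) * layer_out \<rho> S \<Phi>net x 1 1"
    unfolding w by (rule sum_two[OF N1])
  have p: "0 < S ! Suc 1" using NL L2' by (simp add: numeral_2_eq_2)
  have l: "\<not> Suc 1 < length S - 1" using L L2' by simp
  have "layer_out \<rho> S \<Phi>net x (Suc 1) 0 = (let z = (\<Sum>j<S ! 1. fst \<Phi>net (Suc 1) 0 j * layer_out \<rho> S \<Phi>net x 1 j) + snd \<Phi>net (Suc 1) 0
       in if Suc 1 < length S - 1 then \<rho> z else z)"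
    using p lo_suc[of \<rho> S \<Phi>net x 1 0] by (simp only: if_True)
  also have "\<dots> = \<epsilon> * layer_out \<rho> S \<Phi>net x 1 0 + (- \<epsilon>) * layer_out \<rho> S \<Phi>net x 1 1 + c"
    unfolding s b Let_def using l by (simp only: if_False)
  finally show ?thesis by (simp add: algebra_simps del: layer_out.simps)
qed

lemma lo_out3: "L = Suc (Suc (Suc k)) \<Longrightarrow> layer_out \<rho> S \<Phi>net x (Suc (Suc (Suc k))) 0 = \<epsilon> * chain \<rho> a2 b2 a3 b3 k (layer_out \<rho> S \<Phi>net x 1 0 - layer_out \<rho> S \<Phi>net x 1 1) + c"
proof -
  assume k: "L = Suc (Suc (Suc k))"
  have "Suc (Suc k) < length S" using L k by linarith
  then have p: "1 \<le> S ! Suc (Suc k)" using pos by (simp add: Suc_leI)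
  have w: "fst \<Phi>net (Suc (Suc (Suc k))) 0 = (\<lambda>j. if j = 0 then \<epsilon> else 0)"
    using k unfolding \<Phi>net_def by (auto simp: netW_def)
  have b: "snd \<Phi>net (Suc (Suc (Suc k))) 0 = c" using k unfolding \<Phi>net_def by (auto simp: netB_def)
  have s: "(\<Sum>j<S ! Suc (Suc k). fst \<Phi>net (Suc (Suc (Suc k))) 0 j * layer_out \<rho> S \<Phi>net x (Suc (Suc k)) j)
      = \<epsilon> * layer_out \<rho> S \<Phi>net x (Suc (Suc k)) 0"
    unfolding w by (rule sum_one[OF p])
  have ch: "layer_out \<rho> S \<Phi>net x (Suc (Suc k)) 0 = chain \<rho> a2 b2 a3 b3 k (layer_out \<rho> S \<Phi>net x 1 0 - layer_out \<rho> S \<Phi>net x 1 1)"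
    using lo_chain[of k] k by simp
  have p3: "0 < S ! Suc (Suc (Suc k))" using NL k by simp
  have l: "\<not> Suc (Suc (Suc k)) < length S - 1" using L k by simp
  have "layer_out \<rho> S \<Phi>net x (Suc (Suc (Suc k))) 0 = (let z = (\<Sum>j<S ! Suc (Suc k). fst \<Phi>net (Suc (Suc (Suc k))) 0 j * layer_out \<rho> S \<Phi>net x (Suc (Suc k)) j) + snd \<Phi>net (Suc (Suc (Suc k))) 0
       in if Suc (Suc (Suc k)) < length S - 1 then \<rho> z else z)"
    using p3 lo_suc[of \<rho> S \<Phi>net x "Suc (Suc k)" 0] by (simp only: if_True)
  also have "\<dots> = \<epsilon> * layer_out \<rho> S \<Phi>net x (Suc (Suc k)) 0 + c"
    unfolding s b Let_def using l by (simp only: if_False)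
  finally show ?thesis unfolding ch .
qed

lemma lo_out2': "L = 2 \<Longrightarrow> layer_out \<rho> S \<Phi>net x L 0 = \<epsilon> * (layer_out \<rho> S \<Phi>net x 1 0 - layer_out \<rho> S \<Phi>net x 1 1) + c"
proof -
  assume a: "L = 2"
  have e: "L = Suc 1" using a by simp
  show ?thesis using lo_out2[OF a, of x] by (simp only: e)
qed

lemma lo_out3': "L = Suc (Suc (Suc k)) \<Longrightarrow> layer_out \<rho> S \<Phi>net x L 0 = \<epsilon> * chain \<rho> a2 b2 a3 b3 k (layer_out \<rho> S \<Phi>net x 1 0 - layer_out \<rho> S \<Phi>net x 1 1) + c"
proof -
  assume a: "L = Suc (Suc (Suc k))"
  show ?thesis using lo_out3[OF a, of x] by (simp only: a)
qed

end

lemma exists_h: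
  fixes \<rho> :: "real \<Rightarrow> real"
  assumes K: "K-lipschitz_on UNIV \<rho>" and na: "\<not> (\<exists>a b. \<forall>x. \<rho> x = a * x + b)"
  shows "\<exists>h s1 s2. \<rho> s1 - \<rho> (s1 - h) \<noteq> \<rho> s2 - \<rho> (s2 - h)"
proof (rule ccontr)
  assume "\<not> ?thesis"
  then have eq: "\<And>h s1 s2. \<rho> s1 - \<rho> (s1 - h) = \<rho> s2 - \<rho> (s2 - h)" by blast
  define f where "f y = \<rho> y - \<rho> 0" for y
  have add: "f (a + b) = f a + f b" for a b
  proof -
    have "\<rho> (a + b) - \<rho> (a + b - b) = \<rho> b - \<rho> (b - b)" by (rule eq)
    then show ?thesis unfolding f_def by simp
  qed
  have lip: "K-lipschitz_on UNIV f"
  proof (rule lipschitz_onI)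
    fix x y :: real
    show "dist (f x) (f y) \<le> K * dist x y" unfolding f_def using lipschitz_onD[OF K, of x y] by (simp add: dist_real_def)
    show "0 \<le> K" using lipschitz_on_nonneg[OF K] .
  qed
  have "\<forall>x. \<rho> x = f 1 * x + \<rho> 0"
    using additive_lip_linear[OF add lip] unfolding f_def by (metis diff_eq_eq)
  then show False using na by blast
qed

lemma chain_fix:
  assumes "a2 * \<nu> + b2 = s" "a3 * \<rho> s + b3 = s"
  shows "chain \<rho> a2 b2 a3 b3 k \<nu> = \<rho> s"
  using assms by (induction k) auto

lemma chain_bound:
  assumes K: "K-lipschitz_on UNIV \<rho>" and "a2 * \<nu> + b2 = s" "a3 * \<rho> s + b3 = s"
  shows "\<bar>chain \<rho> a2 b2 a3 b3 k t - \<rho> s\<bar> \<le> (K * \<bar>a2\<bar>) * (K * \<bar>a3\<bar>) ^ k * \<bar>t - \<nu>\<bar>"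
proof (induction k)
  case 0
  have "\<bar>\<rho> (a2 * t + b2) - \<rho> (a2 * \<nu> + b2)\<bar> \<le> K * \<bar>(a2 * t + b2) - (a2 * \<nu> + b2)\<bar>"
    using lipschitz_onD[OF K, of "a2 * t + b2" "a2 * \<nu> + b2"] by (simp add: dist_real_def)
  also have "\<bar>(a2 * t + b2) - (a2 * \<nu> + b2)\<bar> = \<bar>a2\<bar> * \<bar>t - \<nu>\<bar>" by (simp add: abs_mult[symmetric] algebra_simps)
  finally show ?case using assms by (simp add: mult.assoc)
next
  case (Suc k)
  have k0: "0 \<le> K" using lipschitz_on_nonneg[OF K] .
  have "\<bar>\<rho> (a3 * chain \<rho> a2 b2 a3 b3 k t + b3) - \<rho> (a3 * \<rho> s + b3)\<bar> \<le> K * \<bar>(a3 * chain \<rho> a2 b2 a3 b3 k t + b3) - (a3 * \<rho> s + b3)\<bar>"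
    using lipschitz_onD[OF K, of "a3 * chain \<rho> a2 b2 a3 b3 k t + b3" "a3 * \<rho> s + b3"] by (simp add: dist_real_def)
  also have "\<bar>(a3 * chain \<rho> a2 b2 a3 b3 k t + b3) - (a3 * \<rho> s + b3)\<bar> = \<bar>a3\<bar> * \<bar>chain \<rho> a2 b2 a3 b3 k t - \<rho> s\<bar>"
    by (simp add: abs_mult[symmetric] algebra_simps)
  finally have "\<bar>chain \<rho> a2 b2 a3 b3 (Suc k) t - \<rho> s\<bar> \<le> K * (\<bar>a3\<bar> * \<bar>chain \<rho> a2 b2 a3 b3 k t - \<rho> s\<bar>)"
    using assms by simp
  also have "\<dots> \<le> K * (\<bar>a3\<bar> * ((K * \<bar>a2\<bar>) * (K * \<bar>a3\<bar>) ^ k * \<bar>t - \<nu>\<bar>))"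
    using Suc.IH k0 by (intro mult_left_mono) auto
  finally show ?case by (simp add: algebra_simps)
qed

lemma exists_net:
  fixes \<rho> :: "real \<Rightarrow> real"
  assumes K: "K-lipschitz_on UNIV \<rho>" and na: "\<not> (\<exists>a b. \<forall>x. \<rho> x = a * x + b)"
    and L: "L = length S - 1" and L2: "2 \<le> L" and pos: "\<forall>l<length S. 0 < S ! l"
    and N1: "S ! 1 \<ge> 2" and NL: "S ! L = 1"
  shows "\<exists>s1 s2 Bnd c0. s1 \<noteq> s2 \<and> c0 \<noteq> 0 \<and> 0 \<le> Bnd \<and>
     (\<forall>\<epsilon>\<ge>0. \<forall>m \<beta>. \<exists>\<Phi>\<in>NN S. (\<forall>x. \<bar>layer_out \<rho> S \<Phi> x L 0\<bar> \<le> \<epsilon> * Bnd) \<and>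
        (\<forall>x y. m * x 0 + \<beta> = s1 \<longrightarrow> m * y 0 + \<beta> = s2 \<longrightarrow>
             layer_out \<rho> S \<Phi> x L 0 - layer_out \<rho> S \<Phi> y L 0 = \<epsilon> * c0))"
proof -
  have k0: "0 \<le> K" using lipschitz_on_nonneg[OF K] .
  obtain h s1 s2 where hs: "\<rho> s1 - \<rho> (s1 - h) \<noteq> \<rho> s2 - \<rho> (s2 - h)" using exists_h[OF K na] by blast
  define D where "D \<sigma> = \<rho> \<sigma> - \<rho> (\<sigma> - h)" for \<sigma>
  have Db: "\<bar>D \<sigma>\<bar> \<le> K * \<bar>h\<bar>" for \<sigma>
    using lipschitz_onD[OF K, of \<sigma> "\<sigma> - h"] unfolding D_def by (simp add: dist_real_def)
  have s12: "s1 \<noteq> s2" using hs by auto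
  obtain s s' where ss: "\<rho> s \<noteq> \<rho> s'"
  proof -
    have "\<not> (\<forall>x. \<rho> x = 0 * x + \<rho> 0)" using na by blast
    then show ?thesis using that by auto
  qed
  define \<nu> where "\<nu> = D s1"
  define \<nu>' where "\<nu>' = D s2"
  have nn: "\<nu> \<noteq> \<nu>'" using hs unfolding \<nu>_def \<nu>'_def D_def .
  define p where "p = \<rho> s"
  define p' where "p' = \<rho> s'"
  define a2 where "a2 = (s' - s) / (\<nu>' - \<nu>)"
  define b2 where "b2 = s - a2 * \<nu>"
  define a3 where "a3 = (s' - s) / (p' - p)"
  define b3 where "b3 = s - a3 * p"
  have e1: "a2 * \<nu> + b2 = s" unfolding b2_def by simp
  have "a2 * (\<nu>' - \<nu>) = s' - s" unfolding a2_def using nn by simp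
  then have e2: "a2 * \<nu>' + b2 = s'" unfolding b2_def by (simp add: algebra_simps)
  have e3: "a3 * \<rho> s + b3 = s" unfolding b3_def p_def by simp
  have "a3 * (p' - p) = s' - s" unfolding a3_def using ss unfolding p_def p'_def by simp
  then have e4: "a3 * \<rho> s' + b3 = s'" unfolding b3_def p'_def by (simp add: algebra_simps)
  show ?thesis
  proof (cases "L = 2")
    case True
    show ?thesis
    proof (intro exI conjI allI impI)
      show "s1 \<noteq> s2" by (rule s12)
      show "\<nu> - \<nu>' \<noteq> 0" using nn by simp
      show "0 \<le> 2 * K * \<bar>h\<bar>" using k0 by simp
      fix \<epsilon> m \<beta> :: real assume eps: "0 \<le> \<epsilon>"
      let ?\<Phi> = "\<Phi>net L m \<epsilon> a2 a3 \<beta> h (- \<epsilon> * \<nu>) b2 b3"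
      have out: "layer_out \<rho> S ?\<Phi> x L 0 = \<epsilon> * D (m * x 0 + \<beta>) - \<epsilon> * \<nu>" for x
        unfolding lo_out2'[OF L L2 pos N1 NL True] lo1_0[OF L L2 pos N1 NL] lo1_1[OF L L2 pos N1 NL] D_def
        by (simp add: algebra_simps)
      show "\<exists>\<Phi>\<in>NN S. (\<forall>x. \<bar>layer_out \<rho> S \<Phi> x L 0\<bar> \<le> \<epsilon> * (2 * K * \<bar>h\<bar>)) \<and>
        (\<forall>x y. m * x 0 + \<beta> = s1 \<longrightarrow> m * y 0 + \<beta> = s2 \<longrightarrow>
             layer_out \<rho> S \<Phi> x L 0 - layer_out \<rho> S \<Phi> y L 0 = \<epsilon> * (\<nu> - \<nu>'))"
      proof (intro bexI conjI allI impI)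
        show "?\<Phi> \<in> NN S" by (rule net_in[OF L L2 pos N1 NL])
        fix x
        have "\<bar>layer_out \<rho> S ?\<Phi> x L 0\<bar> = \<epsilon> * \<bar>D (m * x 0 + \<beta>) - \<nu>\<bar>"
          unfolding out using eps by (simp add: right_diff_distrib[symmetric] abs_mult)
        also have "\<dots> \<le> \<epsilon> * (2 * K * \<bar>h\<bar>)"
        proof (intro mult_left_mono eps)
          have "\<bar>D (m * x 0 + \<beta>) - \<nu>\<bar> \<le> \<bar>D (m * x 0 + \<beta>)\<bar> + \<bar>\<nu>\<bar>" by (rule abs_triangle_ineq4)
          then show "\<bar>D (m * x 0 + \<beta>) - \<nu>\<bar> \<le> 2 * K * \<bar>h\<bar>" using Db[of "m * x 0 + \<beta>"] Db[of s1] unfolding \<nu>_def by linarith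
        qed
        finally show "\<bar>layer_out \<rho> S ?\<Phi> x L 0\<bar> \<le> \<epsilon> * (2 * K * \<bar>h\<bar>)" .
      next
        fix x y :: "nat \<Rightarrow> real" assume that: "m * x 0 + \<beta> = s1" "m * y 0 + \<beta> = s2"
        show "layer_out \<rho> S ?\<Phi> x L 0 - layer_out \<rho> S ?\<Phi> y L 0 = \<epsilon> * (\<nu> - \<nu>')"
        proof -
          have "D (m * x 0 + \<beta>) = \<nu>" "D (m * y 0 + \<beta>) = \<nu>'" using that unfolding \<nu>_def \<nu>'_def by simp_all
          then show ?thesis unfolding out by (simp add: algebra_simps)
        qed
      qed
    qed
  next
    case False
    then obtain k where k: "L = Suc (Suc (Suc k))" using L2
      by (metis add_2_eq_Suc le_Suc_ex le_neq_implies_less less_imp_Suc_add)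
    define Bnd where "Bnd = (K * \<bar>a2\<bar>) * (K * \<bar>a3\<bar>) ^ k * (2 * K * \<bar>h\<bar>)"
    show ?thesis
    proof (intro exI conjI allI impI)
      show "s1 \<noteq> s2" by (rule s12)
      show "p - p' \<noteq> 0" using ss unfolding p_def p'_def by simp
      show "0 \<le> Bnd" unfolding Bnd_def using k0 by simp
      fix \<epsilon> m \<beta> :: real assume eps: "0 \<le> \<epsilon>"
      let ?\<Phi> = "\<Phi>net L m \<epsilon> a2 a3 \<beta> h (- \<epsilon> * p) b2 b3"
      have out: "layer_out \<rho> S ?\<Phi> x L 0 = \<epsilon> * chain \<rho> a2 b2 a3 b3 k (D (m * x 0 + \<beta>)) - \<epsilon> * p" for x
        unfolding lo_out3'[OF L L2 pos N1 NL k] lo1_0[OF L L2 pos N1 NL] lo1_1[OF L L2 pos N1 NL] D_def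
        by (simp add: algebra_simps)
      show "\<exists>\<Phi>\<in>NN S. (\<forall>x. \<bar>layer_out \<rho> S \<Phi> x L 0\<bar> \<le> \<epsilon> * Bnd) \<and>
        (\<forall>x y. m * x 0 + \<beta> = s1 \<longrightarrow> m * y 0 + \<beta> = s2 \<longrightarrow>
             layer_out \<rho> S \<Phi> x L 0 - layer_out \<rho> S \<Phi> y L 0 = \<epsilon> * (p - p'))"
      proof (intro bexI conjI allI impI)
        show "?\<Phi> \<in> NN S" by (rule net_in[OF L L2 pos N1 NL])
        fix x
        have "\<bar>layer_out \<rho> S ?\<Phi> x L 0\<bar> = \<epsilon> * \<bar>chain \<rho> a2 b2 a3 b3 k (D (m * x 0 + \<beta>)) - p\<bar>"
          unfolding out using eps by (simp add: right_diff_distrib[symmetric] abs_mult)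
        also have "\<dots> \<le> \<epsilon> * Bnd"
        proof (intro mult_left_mono eps)
          have c: "\<bar>chain \<rho> a2 b2 a3 b3 k (D (m * x 0 + \<beta>)) - \<rho> s\<bar> \<le> (K * \<bar>a2\<bar>) * (K * \<bar>a3\<bar>) ^ k * \<bar>D (m * x 0 + \<beta>) - \<nu>\<bar>"
            by (rule chain_bound[OF K e1 e3])
          have "\<bar>D (m * x 0 + \<beta>) - \<nu>\<bar> \<le> \<bar>D (m * x 0 + \<beta>)\<bar> + \<bar>\<nu>\<bar>" by (rule abs_triangle_ineq4)
          then have "\<bar>D (m * x 0 + \<beta>) - \<nu>\<bar> \<le> 2 * K * \<bar>h\<bar>" using Db[of "m * x 0 + \<beta>"] Db[of s1] unfolding \<nu>_def by linarith
          then have "(K * \<bar>a2\<bar>) * (K * \<bar>a3\<bar>) ^ k * \<bar>D (m * x 0 + \<beta>) - \<nu>\<bar> \<le> Bnd"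
            unfolding Bnd_def using k0 by (intro mult_left_mono) auto
          then show "\<bar>chain \<rho> a2 b2 a3 b3 k (D (m * x 0 + \<beta>)) - p\<bar> \<le> Bnd" using c unfolding p_def by linarith
        qed
        finally show "\<bar>layer_out \<rho> S ?\<Phi> x L 0\<bar> \<le> \<epsilon> * Bnd" .
      next
        fix x y :: "nat \<Rightarrow> real" assume that: "m * x 0 + \<beta> = s1" "m * y 0 + \<beta> = s2"
        show "layer_out \<rho> S ?\<Phi> x L 0 - layer_out \<rho> S ?\<Phi> y L 0 = \<epsilon> * (p - p')"
        proof -
          have "D (m * x 0 + \<beta>) = \<nu>" "D (m * y 0 + \<beta>) = \<nu>'" using that unfolding \<nu>_def \<nu>'_def by simp_all
          moreover have "chain \<rho> a2 b2 a3 b3 k \<nu> = p" "chain \<rho> a2 b2 a3 b3 k \<nu>' = p'"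
            using chain_fix[of a2 \<nu> b2 s a3 \<rho> b3 k, OF e1 e3] chain_fix[of a2 \<nu>' b2 s' a3 \<rho> b3 k, OF e2 e4] unfolding p_def p'_def by simp_all
          ultimately show ?thesis unfolding out by (simp add: algebra_simps)
        qed
      qed
    qed
  qed
qed

lemma eucl_shift:
  assumes "0 < d"
  shows "eucl_dist d (x(0 := x 0 + t)) x = \<bar>t\<bar>" "eucl_dist d x (x(0 := x 0 + t)) = \<bar>t\<bar>"
proof -
  have "(\<Sum>j<d. ((x(0 := x 0 + t)) j - x j)^2) = (\<Sum>j<d. if j = 0 then t^2 else 0)"
    by (rule sum.cong) auto
  also have "\<dots> = t^2" using assms by (simp add: sum.delta)
  finally show "eucl_dist d (x(0 := x 0 + t)) x = \<bar>t\<bar>" unfolding eucl_dist_def by simp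
  have "(\<Sum>j<d. (x j - (x(0 := x 0 + t)) j)^2) = (\<Sum>j<d. if j = 0 then t^2 else 0)"
    by (rule sum.cong) auto
  also have "\<dots> = t^2" using assms by (simp add: sum.delta)
  finally show "eucl_dist d x (x(0 := x 0 + t)) = \<bar>t\<bar>" unfolding eucl_dist_def by simp
qed

lemma big_slope:
  fixes \<rho> :: "real \<Rightarrow> real" and S :: "nat list" and d :: nat and \<Omega> :: "(nat \<Rightarrow> real) set"
  assumes K: "K-lipschitz_on UNIV \<rho>"
    and not_affine: "\<not> (\<exists>a b. \<forall>x. \<rho> x = a * x + b)"
    and L_ge2: "length S \<ge> 3"
    and pos: "\<forall>l<length S. 0 < S ! l"
    and N0: "S ! 0 = d"
    and N1: "S ! 1 \<ge> 3"
    and NL: "S ! (length S - 1) = 1"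
    and int: "\<exists>x0\<in>Rd d. \<exists>r>0. {x\<in>Rd d. eucl_dist d x x0 < r} \<subseteq> \<Omega>"
    and e: "e > 0"
  shows "\<exists>\<Phi>\<in>NN S. (\<forall>x\<in>\<Omega>. \<bar>realization \<rho> S \<Omega> \<Phi> x\<bar> \<le> e) \<and>
           (\<exists>x\<in>\<Omega>. \<exists>y\<in>\<Omega>. \<bar>realization \<rho> S \<Omega> \<Phi> x - realization \<rho> S \<Omega> \<Phi> y\<bar> > M * eucl_dist d x y)"
proof -
  define L where "L = length S - 1"
  have L2: "2 \<le> L" unfolding L_def using L_ge2 by linarith
  have N1': "S ! 1 \<ge> 2" using N1 by linarith
  have NL': "S ! L = 1" using NL unfolding L_def .
  obtain s1 s2 Bnd c0 where s12: "s1 \<noteq> s2" and c0: "c0 \<noteq> 0" and B0: "0 \<le> Bnd" and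
    net: "\<And>\<epsilon> m \<beta>. \<epsilon> \<ge> 0 \<Longrightarrow> \<exists>\<Phi>\<in>NN S. (\<forall>x. \<bar>layer_out \<rho> S \<Phi> x L 0\<bar> \<le> \<epsilon> * Bnd) \<and>
        (\<forall>x y. m * x 0 + \<beta> = s1 \<longrightarrow> m * y 0 + \<beta> = s2 \<longrightarrow>
             layer_out \<rho> S \<Phi> x L 0 - layer_out \<rho> S \<Phi> y L 0 = \<epsilon> * c0)"
    using exists_net[OF K not_affine L_def L2 pos N1' NL'] by blast
  obtain x0 r where x0: "x0 \<in> Rd d" and r: "r > 0" and ball: "{x\<in>Rd d. eucl_dist d x x0 < r} \<subseteq> \<Omega>"
    using int by blast
  have d0: "0 < d" using pos N0 L_ge2 by (metis gr_zeroI less_zeroE not_less_eq_eq numeral_3_eq_3 le_trans zero_less_Suc less_le_trans le_SucI)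
  define \<epsilon> where "\<epsilon> = e / (Bnd + 1)"
  have eps: "\<epsilon> > 0" unfolding \<epsilon>_def using e B0 by simp
  define A where "A = \<bar>s2 - s1\<bar>"
  define E where "E = \<epsilon> * \<bar>c0\<bar>"
  have E0: "E > 0" unfolding E_def using eps c0 by simp
  define m where "m = 1 + A / r + \<bar>M\<bar> * A / E"
  have A0: "0 \<le> A" unfolding A_def by simp
  have m1: "m \<ge> 1 + A / r" unfolding m_def using A0 E0 by (simp add: divide_nonneg_pos)
  have m2: "m \<ge> 1 + \<bar>M\<bar> * A / E" unfolding m_def using A0 r by (simp add: divide_nonneg_pos)
  have m0: "m > 0" using m1 A0 r by (smt (verit) divide_nonneg_pos)
  define \<beta> where "\<beta> = s1 - m * x0 0"
  obtain \<Phi> where \<Phi>: "\<Phi> \<in> NN S" and bnd: "\<forall>x. \<bar>layer_out \<rho> S \<Phi> x L 0\<bar> \<le> \<epsilon> * Bnd"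
    and dif: "\<forall>x y. m * x 0 + \<beta> = s1 \<longrightarrow> m * y 0 + \<beta> = s2 \<longrightarrow>
             layer_out \<rho> S \<Phi> x L 0 - layer_out \<rho> S \<Phi> y L 0 = \<epsilon> * c0"
    using net[of \<epsilon> m \<beta>] eps by auto
  define t where "t = (s2 - s1) / m"
  define xb where "xb = x0(0 := x0 0 + t)"
  have xbR: "xb \<in> Rd d" using x0 d0 unfolding xb_def Rd_def by auto
  have at: "\<bar>t\<bar> = A / m" unfolding t_def A_def using m0 by simp
  have "A < r * m"
  proof -
    have "A / r < m" using m1 by linarith
    then show ?thesis using r by (simp add: divide_less_eq mult.commute)
  qed
  then have tr: "\<bar>t\<bar> < r" unfolding at using m0 by (simp add: divide_less_eq)
  have xbO: "xb \<in> \<Omega>" using ball xbR tr eucl_shift(1)[OF d0, of x0 t] unfolding xb_def by auto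
  have x0O: "x0 \<in> \<Omega>" using ball x0 eucl_shift(1)[OF d0, of x0 0] r by auto
  have Rx: "realization \<rho> S \<Omega> \<Phi> x = layer_out \<rho> S \<Phi> x L 0" if "x \<in> \<Omega>" for x
    using that unfolding realization_def L_def by simp
  have P1: "\<forall>x\<in>\<Omega>. \<bar>realization \<rho> S \<Omega> \<Phi> x\<bar> \<le> e"
  proof
    fix x assume "x \<in> \<Omega>"
    then have "\<bar>realization \<rho> S \<Omega> \<Phi> x\<bar> \<le> \<epsilon> * Bnd" using bnd Rx by simp
    also have "\<epsilon> * Bnd \<le> e" unfolding \<epsilon>_def using e B0 by (simp add: field_simps)
    finally show "\<bar>realization \<rho> S \<Omega> \<Phi> x\<bar> \<le> e" .
  qed
  have P2: "\<exists>x\<in>\<Omega>. \<exists>y\<in>\<Omega>. \<bar>realization \<rho> S \<Omega> \<Phi> x - realization \<rho> S \<Omega> \<Phi> y\<bar> > M * eucl_dist d x y"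
  proof -
    have s1e: "m * x0 0 + \<beta> = s1" unfolding \<beta>_def by simp
    have s2e: "m * xb 0 + \<beta> = s2" unfolding \<beta>_def xb_def t_def using m0 by (simp add: field_simps)
    have "realization \<rho> S \<Omega> \<Phi> x0 - realization \<rho> S \<Omega> \<Phi> xb = \<epsilon> * c0"
      using dif s1e s2e Rx x0O xbO by simp
    then have dd: "\<bar>realization \<rho> S \<Omega> \<Phi> x0 - realization \<rho> S \<Omega> \<Phi> xb\<bar> = E"
      unfolding E_def using eps by (simp add: abs_mult)
    have ed: "eucl_dist d x0 xb = A / m" using eucl_shift(2)[OF d0, of x0 t] at unfolding xb_def by simp
    have "m * E \<ge> E + \<bar>M\<bar> * A"
    proof -
      have "m * E \<ge> (1 + \<bar>M\<bar> * A / E) * E" using m2 E0 by (intro mult_right_mono) auto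
      moreover have "(1 + \<bar>M\<bar> * A / E) * E = E + \<bar>M\<bar> * A" using E0 by (simp add: distrib_right)
      ultimately show ?thesis by simp
    qed
    then have "m * E > M * A" using E0 A0
      by (smt (verit) abs_ge_self mult_right_mono)
    then have ME: "M * (A / m) < E" using m0 by (simp add: field_simps mult.commute)
    show ?thesis
    proof -
      have "\<bar>realization \<rho> S \<Omega> \<Phi> x0 - realization \<rho> S \<Omega> \<Phi> xb\<bar> > M * eucl_dist d x0 xb"
        unfolding dd ed using ME by simp
      then show ?thesis using x0O xbO by blast
    qed
  qed
  show ?thesis using \<Phi> P1 P2 by blast
qed

lemma zero_net:
  assumes "length S \<ge> 3" and NL: "S ! (length S - 1) = 1"
  shows "(\<lambda>_ _ _. 0, \<lambda>_ _. 0) \<in> NN S" and "realization \<rho> S \<Omega> (\<lambda>_ _ _. 0, \<lambda>_ _. 0) = (\<lambda>x. 0)"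
proof -
  show "(\<lambda>_ _ _. 0, \<lambda>_ _. 0) \<in> NN S" unfolding NN_def by simp
  obtain k where k: "length S - 1 = Suc k" using assms(1) by (metis Suc_pred' diff_Suc_1 le_zero_eq not_less_eq_eq numeral_3_eq_3 zero_less_Suc not_gr_zero)
  have z: "layer_out \<rho> S (\<lambda>_ _ _. 0, \<lambda>_ _. 0) x (Suc k) 0 = 0" for x
    using lo_suc[of \<rho> S "(\<lambda>_ _ _. 0, \<lambda>_ _. 0)" x k 0] NL k by (simp del: layer_out.simps add: Let_def)
  show "realization \<rho> S \<Omega> (\<lambda>_ _ _. 0, \<lambda>_ _. 0) = (\<lambda>x. 0)"
    unfolding realization_def k
  proof (rule ext)
    fix x
    show "(if x \<in> \<Omega> then layer_out \<rho> S (\<lambda>_ _ _. 0, \<lambda>_ _. 0) x (Suc k) 0 else 0) = 0"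
      using z[of x] by (simp only: if_cancel)
  qed
qed

theorem corollary4p3:
  fixes \<rho> :: "real \<Rightarrow> real" and S :: "nat list" and d :: nat and \<Omega> :: "(nat \<Rightarrow> real) set"
  assumes lip: "\<exists>K. K-lipschitz_on UNIV \<rho>"
    and not_affine: "\<not> (\<exists>a b. \<forall>x. \<rho> x = a * x + b)"
    and L_ge2: "length S \<ge> 3"
    and pos: "\<forall>l<length S. 0 < S ! l"
    and N0: "S ! 0 = d"
    and N1: "S ! 1 \<ge> 3"
    and NL: "S ! (length S - 1) = 1"
    and sub: "\<Omega> \<subseteq> Rd d"
    and bdd: "\<exists>C. \<forall>x\<in>\<Omega>. eucl_dist d x (\<lambda>_. 0) \<le> C"
    and int: "\<exists>x0\<in>Rd d. \<exists>r>0. {x\<in>Rd d. eucl_dist d x x0 < r} \<subseteq> \<Omega>"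
  shows "\<not> quotient_map (top_of_set (NN S))
                        (unif_top \<Omega> (realization \<rho> S \<Omega> ` NN S))
                        (realization \<rho> S \<Omega>)"
proof
  assume q: "quotient_map (top_of_set (NN S)) (unif_top \<Omega> (realization \<rho> S \<Omega> ` NN S)) (realization \<rho> S \<Omega>)"
  define R where "R = realization \<rho> S \<Omega>"
  define F where "F = R ` NN S"
  define L where "L = length S - 1"
  obtain K where K: "K-lipschitz_on UNIV \<rho>" using lip by blast
  have rc: "continuous_on UNIV \<rho>" using lipschitz_on_continuous_on[OF K] .
  have "\<forall>n::nat. \<exists>\<Phi>\<in>NN S. (\<forall>x\<in>\<Omega>. \<bar>R \<Phi> x\<bar> \<le> 1 / (real n + 1)) \<and>
           (\<exists>x\<in>\<Omega>. \<exists>y\<in>\<Omega>. \<bar>R \<Phi> x - R \<Phi> y\<bar> > real n * eucl_dist d x y)"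
    unfolding R_def using big_slope[OF K not_affine L_ge2 pos N0 N1 NL int] by simp
  then obtain \<Psi> where \<Psi>: "\<And>n. \<Psi> n \<in> NN S" and \<Psi>b: "\<And>n. \<forall>x\<in>\<Omega>. \<bar>R (\<Psi> n) x\<bar> \<le> 1 / (real n + 1)"
    and \<Psi>s: "\<And>n. \<exists>x\<in>\<Omega>. \<exists>y\<in>\<Omega>. \<bar>R (\<Psi> n) x - R (\<Psi> n) y\<bar> > real n * eucl_dist d x y"
    by metis
  define g where "g n = R (\<Psi> n)" for n
  define Z :: params where "Z = (\<lambda>_ _ _. 0, \<lambda>_ _. 0)"
  have Z: "Z \<in> NN S" "R Z = (\<lambda>x. 0)" unfolding Z_def R_def using zero_net[OF L_ge2 NL] by auto
  have gF: "g n \<in> F" for n unfolding g_def F_def using \<Psi> by auto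
  have gZ: "g n \<noteq> R Z" for n
  proof
    assume "g n = R Z"
    then show False using \<Psi>s[of n] eucl_nonneg unfolding g_def Z(2)
      by (smt (verit) mult_nonneg_nonneg of_nat_0_le_iff)
  qed
  define U where "U = F - range g"
  have topY: "topspace (unif_top \<Omega> F) = F"
  proof
    show "topspace (unif_top \<Omega> F) \<subseteq> F" unfolding topspace_def openin_unif_top unif_open_def by blast
    have "unif_open \<Omega> F F" unfolding unif_open_def by (auto intro: exI[of _ 1])
    then show "F \<subseteq> topspace (unif_top \<Omega> F)" unfolding topspace_def openin_unif_top by blast
  qed
  have UY: "U \<subseteq> topspace (unif_top \<Omega> F)" unfolding topY U_def by blast
  have iff: "openin (top_of_set (NN S)) {x \<in> topspace (top_of_set (NN S)). R x \<in> U} \<longleftrightarrow> openin (unif_top \<Omega> F) U"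
    using q UY unfolding quotient_map_def R_def[symmetric] F_def[symmetric] by blast
  obtain x0 r where x0: "x0 \<in> Rd d" and r: "r > 0" and ball: "{x\<in>Rd d. eucl_dist d x x0 < r} \<subseteq> \<Omega>"
    using int by blast
  have x0O: "x0 \<in> \<Omega>" using ball x0 r by (auto simp: eucl_dist_def)
  have notopen: "\<not> openin (unif_top \<Omega> F) U"
  proof
    assume "openin (unif_top \<Omega> F) U"
    then have "unif_open \<Omega> F U" unfolding openin_unif_top .
    moreover have "R Z \<in> U"
    proof -
      have "R Z \<in> F" unfolding F_def using Z(1) by blast
      moreover have "R Z \<notin> range g" using gZ by (metis imageE)
      ultimately show ?thesis unfolding U_def by blast
    qed
    ultimately obtain e where e: "e > 0" "\<forall>h\<in>F. sup_dist \<Omega> (R Z) h < e \<longrightarrow> h \<in> U"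
      unfolding unif_open_def by blast
    obtain n :: nat where n: "1 / (real n + 1) < e"
    proof -
      obtain n :: nat where "inverse (real (Suc n)) < e" using e(1) reals_Archimedean by blast
      then show ?thesis using that[of n] by (simp add: inverse_eq_divide add.commute)
    qed
    have "sup_dist \<Omega> (R Z) (g n) \<le> 1 / (real n + 1)"
      unfolding sup_dist_def Z(2)
    proof (rule cSUP_least)
      show "\<Omega> \<noteq> {}" using x0O by blast
      fix x assume "x \<in> \<Omega>"
      then show "\<bar>0 - g n x\<bar> \<le> 1 / (real n + 1)" using \<Psi>b[of n] unfolding g_def by simp
    qed
    then have "g n \<in> U" using e(2) gF[of n] n by simp
    then show False unfolding U_def by blast
  qed
  have isopen: "openin (top_of_set (NN S)) {\<Phi> \<in> NN S. R \<Phi> \<in> U}"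
  proof (subst openin_subopen, intro ballI)
    fix \<Phi>0 assume "\<Phi>0 \<in> {\<Phi> \<in> NN S. R \<Phi> \<in> U}"
    then have \<Phi>0: "\<Phi>0 \<in> NN S" "\<And>n. R \<Phi>0 \<noteq> g n" unfolding U_def by auto
    define Idx where "Idx = (\<Union>l<length S. {l} \<times> {..<S ! l} \<times> {..<S ! (l - 1)})"
    have fI: "finite Idx" unfolding Idx_def by auto
    define C0 where "C0 = (\<Sum>t\<in>Idx. \<bar>fst \<Phi>0 (fst t) (fst (snd t)) (snd (snd t))\<bar>)"
    have C00: "0 \<le> C0" unfolding C0_def by (simp add: sum_nonneg)
    define T1 where "T1 = (\<Inter>t\<in>Idx. {\<Phi>::params. \<bar>fst \<Phi> (fst t) (fst (snd t)) (snd (snd t)) - fst \<Phi>0 (fst t) (fst (snd t)) (snd (snd t))\<bar> < 1})"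
    have oT1: "open T1" unfolding T1_def
    proof (rule open_INT[OF fI], rule ballI)
      fix t :: "nat \<times> nat \<times> nat"
      show "open {\<Phi>::params. \<bar>fst \<Phi> (fst t) (fst (snd t)) (snd (snd t)) - fst \<Phi>0 (fst t) (fst (snd t)) (snd (snd t))\<bar> < 1}"
        by (intro open_Collect_less continuous_intros coord_cont)
    qed
    define C where "C = C0 + 1"
    have Cb: "\<forall>l i j. \<bar>fst \<Phi> l i j\<bar> \<le> C" if "\<Phi> \<in> NN S" "\<Phi> \<in> T1" for \<Phi>
    proof (intro allI)
      fix l i j
      show "\<bar>fst \<Phi> l i j\<bar> \<le> C"
      proof (cases "(l, i, j) \<in> Idx")
        case True
        then have "\<bar>fst \<Phi> l i j - fst \<Phi>0 l i j\<bar> < 1" using that(2) unfolding T1_def by auto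
        moreover have "\<bar>fst \<Phi>0 l i j\<bar> \<le> C0" unfolding C0_def
          using member_le_sum[OF True, of "\<lambda>t. \<bar>fst \<Phi>0 (fst t) (fst (snd t)) (snd (snd t))\<bar>"] fI by simp
        ultimately show ?thesis unfolding C_def by linarith
      next
        case False
        then have "length S \<le> l \<or> S ! l \<le> i \<or> S ! (l - 1) \<le> j" unfolding Idx_def by auto
        then have "fst \<Phi> l i j = 0" using that(1) unfolding NN_def by auto
        then show ?thesis unfolding C_def using C00 by simp
      qed
    qed
    define Mb where "Mb = (\<Prod>k<L. max K 1 * real (S ! k) * C)"
    have lipR: "\<bar>R \<Phi> x - R \<Phi> y\<bar> \<le> Mb * eucl_dist d x y" if "\<Phi> \<in> NN S" "\<Phi> \<in> T1" "x \<in> \<Omega>" "y \<in> \<Omega>" for \<Phi> x y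
    proof -
      have "\<forall>i < S ! L. \<bar>layer_out \<rho> S \<Phi> x L i - layer_out \<rho> S \<Phi> y L i\<bar> \<le> Mb * eucl_dist d x y"
        unfolding Mb_def by (rule layer_lip[OF K Cb[OF that(1,2)] N0])
      then show ?thesis using that(3,4) NL unfolding R_def realization_def L_def by auto
    qed
    obtain N :: nat where N: "Mb \<le> real N" using real_arch_simple by blast
    have big: "R \<Phi> \<noteq> g n" if "\<Phi> \<in> NN S" "\<Phi> \<in> T1" "N \<le> n" for \<Phi> n
    proof
      assume eq: "R \<Phi> = g n"
      obtain x y where xy: "x \<in> \<Omega>" "y \<in> \<Omega>" "\<bar>g n x - g n y\<bar> > real n * eucl_dist d x y"
        using \<Psi>s[of n] unfolding g_def by blast
      have "Mb * eucl_dist d x y \<le> real n * eucl_dist d x y"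
        using N that(3) eucl_nonneg[of d x y] by (intro mult_right_mono) auto
      then show False using lipR[OF that(1,2) xy(1,2)] eq xy(3) by simp
    qed
    have "\<forall>n<N. \<exists>x\<in>\<Omega>. R \<Phi>0 x \<noteq> g n x"
    proof (intro allI impI)
      fix n assume "n < N"
      show "\<exists>x\<in>\<Omega>. R \<Phi>0 x \<noteq> g n x"
      proof (rule ccontr)
        assume "\<not> ?thesis"
        then have "R \<Phi>0 = g n" unfolding g_def R_def realization_def by (auto intro!: ext)
        then show False using \<Phi>0(2) by blast
      qed
    qed
    then obtain xs where xs: "\<And>n. n < N \<Longrightarrow> xs n \<in> \<Omega> \<and> R \<Phi>0 (xs n) \<noteq> g n (xs n)" by metis
    define T2 where "T2 = (\<Inter>n\<in>{..<N}. {\<Phi>. layer_out \<rho> S \<Phi> (xs n) L 0 \<noteq> g n (xs n)})"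
    have oT2: "open T2" unfolding T2_def
    proof (rule open_INT, simp, rule ballI)
      fix n
      show "open {\<Phi>::params. layer_out \<rho> S \<Phi> (xs n) L 0 \<noteq> g n (xs n)}"
        by (intro open_Collect_neq layer_cont[OF rc] continuous_intros)
    qed
    have RL: "R \<Phi> x = layer_out \<rho> S \<Phi> x L 0" if "x \<in> \<Omega>" for \<Phi> x
      using that unfolding R_def realization_def L_def by simp
    show "\<exists>T. openin (top_of_set (NN S)) T \<and> \<Phi>0 \<in> T \<and> T \<subseteq> {\<Phi> \<in> NN S. R \<Phi> \<in> U}"
    proof (intro exI conjI)
      show "openin (top_of_set (NN S)) (NN S \<inter> (T1 \<inter> T2))"
        using oT1 oT2 by (intro openin_open_Int open_Int)
      have "layer_out \<rho> S \<Phi>0 (xs n) L 0 \<noteq> g n (xs n)" if "n < N" for n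
        using xs[OF that] RL[of "xs n" \<Phi>0] by auto
      then show "\<Phi>0 \<in> NN S \<inter> (T1 \<inter> T2)"
        using \<Phi>0(1) unfolding T1_def T2_def by auto
      show "NN S \<inter> (T1 \<inter> T2) \<subseteq> {\<Phi> \<in> NN S. R \<Phi> \<in> U}"
      proof
        fix \<Phi> assume \<Phi>: "\<Phi> \<in> NN S \<inter> (T1 \<inter> T2)"
        have "R \<Phi> \<noteq> g n" for n
        proof (cases "N \<le> n")
          case True
          then show ?thesis using big \<Phi> by blast
        next
          case False
          then have "n < N" by simp
          then have "layer_out \<rho> S \<Phi> (xs n) L 0 \<noteq> g n (xs n)" using \<Phi> unfolding T2_def by auto
          then show ?thesis using RL xs \<open>n < N\<close> by metis
        qed
        then show "\<Phi> \<in> {\<Phi> \<in> NN S. R \<Phi> \<in> U}" using \<Phi> unfolding U_def F_def by auto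
      qed
    qed
  qed
  show False using iff notopen isopen by simp
qed

end
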